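(* Let $t\in\Lambda_s$ be a simple term such that $t\frown t$. Then $t$ is in $\mathsf{r}$-normal form if and only if $t$ is a resource approximant.
   Context: Call-by-value resource calculus. Resource values $u,v::=x\mid \lambda x.t$; simple terms $s,t::= st\mid [v_1,\dots,v_k]$ ($k\ge0$, bags are finite multisets); $\Lambda_s$ is the set of simple terms. The reduction $\to_{\mathsf{r}}$ is the contextual closure (extended to finite sets of terms) of the rules: $(\beta_r)$ $[\lambda x.t][v_1,\dots,v_n]\to t\langle v_1,\dots,v_n/x\rangle$ (the set of all ways of linearly substituting the $v_i$ for the free occurrences of $x$, empty if the number of occurrences differs from $n$); $(0)$ $[v_1,\dots,v_n]\,t\to\emptyset$ when $n\neq1$; $(\sigma_1)$ $[\lambda x.t]s_1s_2\to[\lambda x.ts_2]s_1$ if $x\notin FV(s_1)$; $(\sigma_3)$ $[v]([\lambda x.t]s)\to[\lambda x.[v]t]s$ if $x\notin FV(v)$. The coherence relation $\frown$ on resource terms is the smallest relation such that: $x\frown x$; $\lambda x.s\frown\lambda x.t$ whenever $s\frown t$; $[v_1,\dots,v_k]\frown[v_{k+1},\dots,v_n]$ whenever $v_i\frown v_j$ for all $i,j\le n$; $s_1t_1\frown s_2t_2$ whenever $s_1\frown s_2$ and $t_1\frown t_2$. Resource approximants are the simple terms generated by ($k,n\ge0$): $a::=b\mid c$; $b::=[x^n]\mid[\lambda x.a_1,\dots,\lambda x.a_n]\mid [x]\,b\,a_1\cdots a_k$; $c::=[\lambda x.a]([y]\,b\,a_1\cdots a_k)$, where $[x^n]$ is the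 bag with $n$ copies of $x$. *)

theory Defs
  imports "HOL-Library.Multiset"
begin

text \<open>Call-by-value resource calculus, with variables represented by de Bruijn
  indices (terms are thus taken up to alpha-equivalence).\<close>

datatype rval = Var nat | Lam sterm
     and sterm = App sterm sterm | Bag "rval multiset"

primrec liftv :: "nat \<Rightarrow> rval \<Rightarrow> rval"
  and liftt :: "nat \<Rightarrow> sterm \<Rightarrow> sterm" where
  "liftv k (Var i) = Var (if i < k then i else Suc i)"
| "liftv k (Lam t) = Lam (liftt (Suc k) t)"
| "liftt k (App s t) = App (liftt k s) (liftt k t)"
| "liftt k (Bag M) = Bag (image_mset (liftv k) M)"

text \<open>Linear substitution: \<open>lsubt k vs t t'\<close> means that \<open>t'\<close> is one of the
  ways of linearly substituting the values of the multiset \<open>vs\<close> for the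
  (exactly \<open>size vs\<close>) occurrences of index \<open>k\<close> in \<open>t\<close>, the binder of \<open>k\<close>
  being removed (indices above \<open>k\<close> are decremented).  The values in \<open>vs\<close>
  are already expressed relative to the context at depth \<open>k\<close>.
  Thus \<open>t\<langle>v1,...,vn/x\<rangle>\<close> corresponds to \<open>{t'. lsubt 0 vs t t'}\<close>.\<close>

inductive lsubv :: "nat \<Rightarrow> rval multiset \<Rightarrow> rval \<Rightarrow> rval \<Rightarrow> bool"
  and lsubt :: "nat \<Rightarrow> rval multiset \<Rightarrow> sterm \<Rightarrow> sterm \<Rightarrow> bool" where
  lsub_var_hit: "lsubv k {#v#} (Var k) v"
| lsub_var_other: "i \<noteq> k \<Longrightarrow> lsubv k {#} (Var i) (Var (if i < k then i else i - 1))"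
| lsub_lam: "lsubt (Suc k) (image_mset (liftv 0) vs) t t' \<Longrightarrow> lsubv k vs (Lam t) (Lam t')"
| lsub_app: "lsubt k vs1 s s' \<Longrightarrow> lsubt k vs2 t t' \<Longrightarrow>
     lsubt k (vs1 + vs2) (App s t) (App s' t')"
| lsub_bag_empty: "lsubt k {#} (Bag {#}) (Bag {#})"
| lsub_bag_add: "lsubv k vs1 u u' \<Longrightarrow> lsubt k vs2 (Bag M) (Bag M') \<Longrightarrow>
     lsubt k (vs1 + vs2) (Bag (add_mset u M)) (Bag (add_mset u' M'))"

text \<open>The freshness side conditions of \<open>\<sigma>\<^sub>1\<close>, \<open>\<sigma>\<^sub>3\<close> concern a bound variable and
  are handled by the index lifting (they always hold up to alpha).\<close>

inductive red :: "sterm \<Rightarrow> sterm set \<Rightarrow> bool" where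
  red_beta: "red (App (Bag {#Lam t#}) (Bag vs)) {t'. lsubt 0 vs t t'}"
| red_zero: "size vs \<noteq> 1 \<Longrightarrow> red (App (Bag vs) t) {}"
| red_sigma1: "red (App (App (Bag {#Lam t#}) s1) s2)
     {App (Bag {#Lam (App t (liftt 0 s2))#}) s1}"
| red_sigma3: "red (App (Bag {#v#}) (App (Bag {#Lam t#}) s))
     {App (Bag {#Lam (App (Bag {#liftv 0 v#}) t)#}) s}"
| red_app_l: "red s S \<Longrightarrow> red (App s t) ((\<lambda>s'. App s' t) ` S)"
| red_app_r: "red t T \<Longrightarrow> red (App s t) ((\<lambda>t'. App s t') ` T)"
| red_bag: "red t T \<Longrightarrow> red (Bag (add_mset (Lam t) M)) ((\<lambda>t'. Bag (add_mset (Lam t') M)) ` T)"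

definition r_normal :: "sterm \<Rightarrow> bool" where
  "r_normal t \<longleftrightarrow> \<not> (\<exists>T. red t T)"

inductive cohv :: "rval \<Rightarrow> rval \<Rightarrow> bool"
  and coht :: "sterm \<Rightarrow> sterm \<Rightarrow> bool" where
  coh_var: "cohv (Var x) (Var x)"
| coh_lam: "coht s t \<Longrightarrow> cohv (Lam s) (Lam t)"
| coh_bag: "(\<forall>u\<in>#A + B. \<forall>w\<in>#A + B. cohv u w) \<Longrightarrow> coht (Bag A) (Bag B)"
| coh_app: "coht s1 s2 \<Longrightarrow> coht t1 t2 \<Longrightarrow> coht (App s1 t1) (App s2 t2)"

definition apps :: "sterm \<Rightarrow> sterm list \<Rightarrow> sterm" where
  "apps h as = foldl App h as"

inductive approx_a :: "sterm \<Rightarrow> bool"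
  and approx_b :: "sterm \<Rightarrow> bool"
  and approx_c :: "sterm \<Rightarrow> bool" where
  a_b: "approx_b t \<Longrightarrow> approx_a t"
| a_c: "approx_c t \<Longrightarrow> approx_a t"
| b_vars: "approx_b (Bag (replicate_mset n (Var x)))"
| b_lams: "(\<forall>a\<in>set as. approx_a a) \<Longrightarrow> approx_b (Bag (mset (map Lam as)))"
| b_head: "approx_b b \<Longrightarrow> (\<forall>a\<in>set as. approx_a a) \<Longrightarrow>
     approx_b (apps (App (Bag {#Var x#}) b) as)"
| c_red: "approx_a a \<Longrightarrow> approx_b b \<Longrightarrow> (\<forall>a'\<in>set as. approx_a a') \<Longrightarrow>
     approx_c (App (Bag {#Lam a#}) (apps (App (Bag {#Var y#}) b) as))"

end

theory Submission
  imports Defs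
begin

inductive_cases redAppE: "red (App s t) T"
inductive_cases redBagE: "red (Bag M) T"
inductive_cases cohAppE: "coht (App s t) (App s' t')"
inductive_cases cohBagE: "coht (Bag A) (Bag B)"
inductive_cases cohLamE: "cohv (Lam s) (Lam t)"
inductive_cases cohVarE: "cohv (Var x) w"

lemma apps_snoc: "apps h (as @ [a]) = App (apps h as) a"
  by (simp add: apps_def)

lemma apps_Nil: "apps h [] = h"
  by (simp add: apps_def)

lemma apps_App_not_Bag: "apps (App h b) as \<noteq> Bag M"
  by (induction as rule: rev_induct) (auto simp: apps_snoc apps_Nil)

lemma apps_App_eq_App_Bag:
  "apps (App h b) as = App (Bag M) s \<Longrightarrow> as = [] \<and> h = Bag M \<and> b = s"
  by (cases as rule: rev_cases) (auto simp: apps_snoc apps_Nil apps_App_not_Bag)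

lemma red_Bag_Lam: "red (Bag M) T \<Longrightarrow> \<exists>t M' T'. M = add_mset (Lam t) M' \<and> red t T'"
  by (erule redBagE) auto

lemma normal_App: "r_normal (App s t) \<Longrightarrow> r_normal s \<and> r_normal t"
  unfolding r_normal_def using red_app_l red_app_r by blast

lemma normal_Bag_Lam: "r_normal (Bag M) \<Longrightarrow> Lam u \<in># M \<Longrightarrow> r_normal u"
  unfolding r_normal_def
proof
  assume "\<not> (\<exists>T. red (Bag M) T)" "Lam u \<in># M" "\<exists>T. red u T"
  then obtain T where "red u T" by blast
  from red_bag[OF this, of "M - {#Lam u#}"] \<open>Lam u \<in># M\<close>
  have "red (Bag M) ((\<lambda>t'. Bag (add_mset (Lam t') (M - {#Lam u#}))) ` T)"
    by (simp add: insert_DiffM)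
  thus False using \<open>\<not> (\<exists>T. red (Bag M) T)\<close> by blast
qed

lemma head_normal:
  assumes "r_normal b" "\<forall>a\<in>set as. r_normal a" "\<forall>u s. b \<noteq> App (Bag {#Lam u#}) s"
  shows "r_normal (apps (App (Bag {#Var x#}) b) as)"
  using assms(2)
proof (induction as rule: rev_induct)
  case Nil
  show ?case unfolding apps_Nil r_normal_def
  proof
    assume "\<exists>T. red (App (Bag {#Var x#}) b) T"
    then obtain T where "red (App (Bag {#Var x#}) b) T" by blast
    then show False
      apply (rule redAppE)
           subgoal by auto
          subgoal by auto
         subgoal by auto
        subgoal using assms(3) by (blast)
       subgoal using red_Bag_Lam by (metis add_mset_eq_singleton_iff rval.distinct(1))
      subgoal using assms(1) unfolding r_normal_def by (blast)
      done
  qed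
next
  case (snoc a as)
  show ?case unfolding apps_snoc r_normal_def
  proof
    assume "\<exists>T. red (App (apps (App (Bag {#Var x#}) b) as) a) T"
    then obtain T where "red (App (apps (App (Bag {#Var x#}) b) as) a) T" by blast
    then show False
      apply (rule redAppE)
           subgoal by (simp add: apps_App_not_Bag)
          subgoal by (simp add: apps_App_not_Bag)
         subgoal using apps_App_eq_App_Bag[of "Bag {#Var x#}" b as] by (auto)
        subgoal by (simp add: apps_App_not_Bag)
       subgoal using snoc unfolding r_normal_def by (auto)
      subgoal using snoc unfolding r_normal_def by (auto)
      done
  qed
qed

lemma approx_b_not_c: "approx_b t \<Longrightarrow> t \<noteq> App (Bag {#Lam u#}) s"
proof (induction rule: approx_b.cases)
  case (b_head b as x)
  then show ?case using apps_App_eq_App_Bag[of "Bag {#Var x#}" b as "{#Lam u#}" s] by auto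
qed auto

lemma approx_normal:
  shows "approx_a t \<Longrightarrow> r_normal t"
    and "approx_b t \<Longrightarrow> r_normal t"
    and "approx_c t \<Longrightarrow> r_normal t"
proof (induction rule: approx_a_approx_b_approx_c.inducts)
  case (b_vars n x)
  show ?case unfolding r_normal_def
  proof
    assume "\<exists>T. red (Bag (replicate_mset n (Var x))) T"
    then obtain t M' where "replicate_mset n (Var x) = add_mset (Lam t) M'"
      using red_Bag_Lam by blast
    then have "Lam t \<in># replicate_mset n (Var x)" by simp
    then show False by (simp split: if_splits)
  qed
next
  case (b_lams as)
  show ?case unfolding r_normal_def
  proof
    assume "\<exists>T. red (Bag (mset (map Lam as))) T"
    then obtain t M' T' where e: "mset (map Lam as) = add_mset (Lam t) M'" and r: "red t T'"
      using red_Bag_Lam by blast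
    then have "Lam t \<in># mset (map Lam as)" by simp
    then have "t \<in> set as" by auto
    then show False using b_lams r unfolding r_normal_def by blast
  qed
next
  case (b_head b as x)
  then show ?case using head_normal[of b as x] approx_b_not_c by blast
next
  case (c_red a b as y)
  have nb: "r_normal (apps (App (Bag {#Var y#}) b) as)"
    using head_normal c_red approx_b_not_c by blast
  show ?case unfolding r_normal_def
  proof
    assume "\<exists>T. red (App (Bag {#Lam a#}) (apps (App (Bag {#Var y#}) b) as)) T"
    then obtain T where "red (App (Bag {#Lam a#}) (apps (App (Bag {#Var y#}) b) as)) T" by blast
    then show False
      apply (rule redAppE)
           subgoal by (simp add: apps_App_not_Bag)
          subgoal by auto
         subgoal by auto
        subgoal using apps_App_eq_App_Bag[of "Bag {#Var y#}" b as] by (auto)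
       subgoal using c_red red_Bag_Lam unfolding r_normal_def by (metis add_mset_eq_singleton_iff rval.inject(2))
      subgoal using nb unfolding r_normal_def by (blast)
      done
  qed
qed auto


lemma approx_a_cases: "approx_a t \<Longrightarrow> approx_b t \<or> approx_c t"
  by (erule approx_a.cases) auto

lemma approx_c_form: "approx_c t \<Longrightarrow> \<exists>a b as y. t = App (Bag {#Lam a#}) (apps (App (Bag {#Var y#}) b) as)"
  by (erule approx_c.cases) auto

lemma approx_b_App_form: "approx_b t \<Longrightarrow> t = App t1 t2 \<Longrightarrow>
   \<exists>b as x. t = apps (App (Bag {#Var x#}) b) as \<and> approx_b b \<and> (\<forall>a\<in>set as. approx_a a)"
  by (erule approx_b.cases) (simp, simp, blast)

lemma approx_a_Lam: "approx_a (Bag {#Lam u#}) \<Longrightarrow> approx_a u"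
proof -
  assume "approx_a (Bag {#Lam u#})"
  then have "approx_b (Bag {#Lam u#})"
    using approx_a_cases approx_c_form by blast
  then show "approx_a u"
  proof (cases rule: approx_b.cases)
    case (b_vars n x)
    then have "Lam u \<in># replicate_mset n (Var x)" by (metis multi_member_last)
    then show ?thesis by (simp split: if_splits)
  next
    case (b_lams as)
    then have "Lam u \<in># mset (map Lam as)" by (metis multi_member_last)
    then have "u \<in> set as" by auto
    then show ?thesis using b_lams by blast
  next
    case (b_head b as x)
    then show ?thesis using apps_App_not_Bag by metis
  qed
qed

lemma replicate_from_all: "\<forall>w\<in>#M. w = c \<Longrightarrow> M = replicate_mset (size M) c"
  by (rule set_mset_subset_singletonD) auto

lemma normal_approx:
  shows "coht t t \<Longrightarrow> r_normal t \<Longrightarrow> approx_a t"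
proof (induction t rule: sterm.induct[where ?P1.0 = "\<lambda>v. \<forall>u. v = Lam u \<longrightarrow> coht u u \<longrightarrow> r_normal u \<longrightarrow> approx_a u"])
  case (Var x)
  then show ?case by simp
next
  case (Lam x)
  then show ?case by simp
next
  case (App s t)
  have cs: "coht s s" and ct: "coht t t" using App.prems(1) by (auto elim: cohAppE)
  have ns: "r_normal s" and nt: "r_normal t" using App.prems(2) normal_App by blast+
  have as: "approx_a s" and at: "approx_a t" using App.IH cs ct ns nt by blast+
  have noredex: "\<And>T. \<not> red (App s t) T" using App.prems(2) unfolding r_normal_def by blast
  show ?case
  proof (cases s)
    case (Bag M)
    have "size M = 1"
    proof (rule ccontr)
      assume "size M \<noteq> 1"
      then have "red (App s t) {}" using Bag red_zero by simp
      then show False using noredex by blast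
    qed
    then obtain w where M: "M = {#w#}" using size_1_singleton_mset by blast
    have tnc: "\<not> approx_c t"
    proof
      assume "approx_c t"
      then obtain a b as y where "t = App (Bag {#Lam a#}) (apps (App (Bag {#Var y#}) b) as)"
        using approx_c_form by blast
      then show False using noredex red_sigma3 Bag M by blast
    qed
    then have tb: "approx_b t" using at approx_a_cases by blast
    show ?thesis
    proof (cases w)
      case (Var x)
      have "approx_b (apps (App (Bag {#Var x#}) t) [])"
        by (rule b_head) (use tb in auto)
      then show ?thesis using Bag M Var by (simp add: apps_Nil a_b)
    next
      case (Lam u)
      have "\<not> (\<exists>N. t = Bag N)" using noredex red_beta Bag M Lam by blast
      then obtain t1 t2 where "t = App t1 t2" by (cases t) auto
      then obtain b as y where tf: "t = apps (App (Bag {#Var y#}) b) as" and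
          bb: "approx_b b" and aas: "\<forall>a\<in>set as. approx_a a"
        using approx_b_App_form tb by blast
      have "approx_a u" using approx_a_Lam as Bag M Lam by simp
      then have "approx_c (App (Bag {#Lam u#}) (apps (App (Bag {#Var y#}) b) as))"
        using c_red bb aas by blast
      then show ?thesis using Bag M Lam tf a_c by simp
    qed
  next
    case (App s1 s2)
    have snc: "\<not> approx_c s"
    proof
      assume "approx_c s"
      then obtain a b as y where "s = App (Bag {#Lam a#}) (apps (App (Bag {#Var y#}) b) as)"
        using approx_c_form by blast
      then show False using noredex red_sigma1 by blast
    qed
    then have "approx_b s" using as approx_a_cases by blast
    then obtain b as' x where sf: "s = apps (App (Bag {#Var x#}) b) as'" and
          bb: "approx_b b" and aas: "\<forall>a\<in>set as'. approx_a a"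
      using approx_b_App_form App by blast
    have "approx_b (apps (App (Bag {#Var x#}) b) (as' @ [t]))"
      by (rule b_head) (use bb aas at in auto)
    then show ?thesis using sf by (simp add: apps_snoc a_b)
  qed
next
  case (Bag M)
  have coh: "\<forall>u\<in>#M. \<forall>w\<in>#M. cohv u w" using Bag.prems(1) by (auto elim: cohBagE)
  show ?case
  proof (cases "\<exists>x. Var x \<in># M")
    case True
    then obtain x where x: "Var x \<in># M" by blast
    then have "\<forall>w\<in>#M. w = Var x" using coh by (auto elim: cohVarE)
    then have "M = replicate_mset (size M) (Var x)" by (rule replicate_from_all)
    then show ?thesis by (metis b_vars a_b)
  next
    case False
    obtain ws where ws: "M = mset ws" using ex_mset by metis
    define as where "as = map (\<lambda>w. case w of Lam u \<Rightarrow> u | Var _ \<Rightarrow> Bag {#}) ws"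
    have "map Lam as = ws"
      unfolding as_def using False ws
      by (induction ws arbitrary: M) (auto split: rval.splits)
    then have Mas: "M = mset (map Lam as)" using ws by simp
    have "\<forall>a\<in>set as. approx_a a"
    proof
      fix a assume "a \<in> set as"
      then have la: "Lam a \<in># M" using Mas by auto
      then have "cohv (Lam a) (Lam a)" using coh by blast
      then have "coht a a" by (auto elim: cohLamE)
      moreover have "r_normal a" using normal_Bag_Lam Bag.prems(2) la by blast
      ultimately show "approx_a a" using Bag(1) la by blast
    qed
    then show ?thesis using Mas b_lams a_b by metis
  qed
qed

theorem lemma3p16:
  fixes t :: sterm
  assumes "coht t t"
  shows "r_normal t \<longleftrightarrow> approx_a t"
  using normal_approx[OF assms] approx_normal(1) by blast

end
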